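(* Let a program execution be a finite sequence of heaps $h_0,h_1,\dots,h_n$, where $h_0$ is the initial heap in which the only allocated object is the special object $\mathit{Void}$, which is open, and each $h_{i+1}$ is obtained from $h_i$ by one elementary step: either allocating a fresh object, or updating a single attribute $x.a$ of an allocated object $x$ to a value $y$ (giving the heap $h_i[x.a\mapsto y]$). Every object $o$ has a class invariant $o.\mathit{inv}$, a Boolean expression evaluated in a heap. Consider a verification methodology $M$ whose proof obligations guarantee, for every step of every execution of a program that satisfies them: (a) every freshly allocated object is open; (b) whenever $x.\mathit{closed}$ is updated to $\mathit{True}$, $x.\mathit{inv}$ holds in the state before the step; (c) whenever an attribute $x.a$ with $a\neq\mathit{closed}$ is updated to some value $y$ in heap $h$, every object $o$ concerned with this update satisfies $(o.\mathit{closed}\wedge o.\mathit{inv})_h \Rightarrow (o.\mathit{inv})_{h[x.a\mapsto y]}$; (d) class invariants depend neither on the attribute $\mathit{closed}$ (of any object) nor on the allocation status of objects (so allocating a new object, or changing any $\mathit{closed}$ attribute, does not change the truth value of the invariant of any previously allocated object). Then every program that satisfies $M$'s proof obligations satisfies, in every heap of every execution, the property $$\forall o:\ o.\mathit{closed}\Rightarrow o.\mathit{inv} \qquad\text{(G1)}$$ (quantifying over allocated objects).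
   Context: Every object has a built-in Boolean ghost attribute $\mathit{closed}$; $o$ is open if $o.\mathit{closed}=\mathit{False}$. An object $o$ is concerned with an attribute $a$ of an object $x$ if updating $x.a$ might affect the truth value of $o$'s invariant; objects not concerned with an update keep the truth value of their invariant across it. *)

theory Defs
  imports Main
begin

text \<open>A heap over objects 'o, (ordinary) attributes 'a and values 'v:
  the set of allocated objects, the ghost Boolean attribute closed of every
  object, and the values of all other attributes.\<close>
record ('o, 'a, 'v) heap =
  alloc  :: "'o set"
  closed :: "'o \<Rightarrow> bool"
  fld    :: "'o \<Rightarrow> 'a \<Rightarrow> 'v"

datatype ('o, 'a, 'v) action =
    Alloc 'o
  | Update 'o 'a 'v
  | SetClosed 'o bool

definition heap_upd :: "('o,'a,'v) heap \<Rightarrow> 'o \<Rightarrow> 'a \<Rightarrow> 'v \<Rightarrow> ('o,'a,'v) heap" where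
  "heap_upd h x a y = h\<lparr>fld := (fld h)(x := (fld h x)(a := y))\<rparr>"

definition heap_set_closed :: "('o,'a,'v) heap \<Rightarrow> 'o \<Rightarrow> bool \<Rightarrow> ('o,'a,'v) heap" where
  "heap_set_closed h x b = h\<lparr>closed := (closed h)(x := b)\<rparr>"

fun estep :: "('o,'a,'v) heap \<Rightarrow> ('o,'a,'v) action \<Rightarrow> ('o,'a,'v) heap \<Rightarrow> bool" where
  "estep h (Alloc ob) h' \<longleftrightarrow>
     ob \<notin> alloc h \<and> alloc h' = insert ob (alloc h) \<and>
     (\<forall>p\<in>alloc h. closed h' p = closed h p \<and> fld h' p = fld h p)"
| "estep h (Update x a y) h' \<longleftrightarrow> x \<in> alloc h \<and> h' = heap_upd h x a y"
| "estep h (SetClosed x b) h' \<longleftrightarrow> x \<in> alloc h \<and> h' = heap_set_closed h x b"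

definition execution :: "'o \<Rightarrow> ('o,'a,'v) heap list \<Rightarrow> ('o,'a,'v) action list \<Rightarrow> bool" where
  "execution Void hs acts \<longleftrightarrow>
     hs \<noteq> [] \<and> length acts = length hs - 1 \<and>
     alloc (hs ! 0) = {Void} \<and> \<not> closed (hs ! 0) Void \<and>
     (\<forall>i < length acts. estep (hs ! i) (acts ! i) (hs ! Suc i))"

text \<open>"Concerned": objects not concerned with attribute a of x keep the truth
  value of their invariant across any update of x.a.\<close>
definition concerned_sound ::
  "('o \<Rightarrow> ('o,'a,'v) heap \<Rightarrow> bool) \<Rightarrow> ('o \<Rightarrow> 'o \<Rightarrow> 'a \<Rightarrow> bool) \<Rightarrow> bool" where
  "concerned_sound Inv concerned \<longleftrightarrow>
     (\<forall>h x a y ob. x \<in> alloc h \<longrightarrow> ob \<in> alloc h \<longrightarrow> \<not> concerned ob x a \<longrightarrow>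
        Inv ob (heap_upd h x a y) = Inv ob h)"

text \<open>The guarantees (a)-(d) of the methodology for one step h --act--> h'.\<close>
definition step_obligations ::
  "('o \<Rightarrow> ('o,'a,'v) heap \<Rightarrow> bool) \<Rightarrow> ('o \<Rightarrow> 'o \<Rightarrow> 'a \<Rightarrow> bool) \<Rightarrow>
   ('o,'a,'v) heap \<Rightarrow> ('o,'a,'v) action \<Rightarrow> ('o,'a,'v) heap \<Rightarrow> bool" where
  "step_obligations Inv concerned h act h' \<longleftrightarrow>
     (\<forall>ob. act = Alloc ob \<longrightarrow> \<not> closed h' ob) \<and>
     (\<forall>x. act = SetClosed x True \<longrightarrow> Inv x h) \<and>
     (\<forall>x a y. act = Update x a y \<longrightarrow>
        (\<forall>ob\<in>alloc h. concerned ob x a \<longrightarrow> closed h ob \<and> Inv ob h \<longrightarrow> Inv ob h')) \<and>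
     ((\<exists>ob. act = Alloc ob) \<or> (\<exists>x b. act = SetClosed x b) \<longrightarrow>
        (\<forall>p\<in>alloc h. Inv p h' = Inv p h))"

end

theory Submission
  imports Defs
begin

theorem lemma2:
  fixes Void :: 'o
    and Inv :: "'o \<Rightarrow> ('o,'a,'v) heap \<Rightarrow> bool"
    and concerned :: "'o \<Rightarrow> 'o \<Rightarrow> 'a \<Rightarrow> bool"
    and hs :: "('o,'a,'v) heap list"
    and acts :: "('o,'a,'v) action list"
  assumes "concerned_sound Inv concerned"
    and "execution Void hs acts"
    and "\<forall>i < length acts. step_obligations Inv concerned (hs ! i) (acts ! i) (hs ! Suc i)"
  shows "\<forall>i < length hs. \<forall>ob \<in> alloc (hs ! i). closed (hs ! i) ob \<longrightarrow> Inv ob (hs ! i)"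
proof (intro allI impI)
  fix i assume "i < length hs"
  then show "\<forall>ob \<in> alloc (hs ! i). closed (hs ! i) ob \<longrightarrow> Inv ob (hs ! i)"
  proof (induction i)
    case 0
    then show ?case using assms(2) by (auto simp: execution_def)
  next
    case (Suc i)
    have il: "i < length acts" using Suc.prems assms(2) by (auto simp: execution_def)
    have IH: "\<forall>ob \<in> alloc (hs ! i). closed (hs ! i) ob \<longrightarrow> Inv ob (hs ! i)"
      using Suc by simp
    have st: "estep (hs ! i) (acts ! i) (hs ! Suc i)" using il assms(2) by (auto simp: execution_def)
    have ob: "step_obligations Inv concerned (hs ! i) (acts ! i) (hs ! Suc i)" using il assms(3) by auto
    show ?case
    proof (cases "acts ! i")
      case (Alloc o1)
      then show ?thesis using st ob IH unfolding step_obligations_def by auto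
    next
      case (Update x a y)
      show ?thesis
      proof (intro ballI impI)
        fix p assume p: "p \<in> alloc (hs ! Suc i)" "closed (hs ! Suc i) p"
        have h': "hs ! Suc i = heap_upd (hs ! i) x a y" and xa: "x \<in> alloc (hs ! i)"
          using st Update by auto
        have pa: "p \<in> alloc (hs ! i)" and pc: "closed (hs ! i) p"
          using p h' by (auto simp: heap_upd_def)
        have pi: "Inv p (hs ! i)" using IH pa pc by auto
        show "Inv p (hs ! Suc i)"
        proof (cases "concerned p x a")
          case True
          then show ?thesis using ob Update pa pc pi unfolding step_obligations_def by auto
        next
          case False
          then show ?thesis using assms(1) xa pa pi h' unfolding concerned_sound_def by auto
        qed
      qed
    next
      case (SetClosed x b)
      show ?thesis
      proof (intro ballI impI)
        fix p assume p: "p \<in> alloc (hs ! Suc i)" "closed (hs ! Suc i) p"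
        have h': "hs ! Suc i = heap_set_closed (hs ! i) x b" and xa: "x \<in> alloc (hs ! i)"
          using st SetClosed by auto
        have pa: "p \<in> alloc (hs ! i)" using p h' by (auto simp: heap_set_closed_def)
        have eq: "Inv p (hs ! Suc i) = Inv p (hs ! i)"
          using ob SetClosed pa unfolding step_obligations_def by auto
        show "Inv p (hs ! Suc i)"
        proof (cases "p = x")
          case True
          then have "b" using p h' by (auto simp: heap_set_closed_def)
          then show ?thesis using ob SetClosed True eq unfolding step_obligations_def by auto
        next
          case False
          then have "closed (hs ! i) p" using p h' by (auto simp: heap_set_closed_def)
          then show ?thesis using IH pa eq by auto
        qed
      qed
    qed
  qed
qed

end
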